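(* Let $K$ be a compact Hausdorff scattered space of finite height and let $K^{(n)}$ denote its $n$-th Cantor--Bendixson derivative (with $K^{(0)}=K$). If for every $n$ the set $K^{(n+1)}$ admits an extension operator in $K^{(n)}$, then $K$ has the extension property.
   Context: $K^{(n+1)}$ is the set of non-isolated points of $K^{(n)}$; finite height means $K^{(n)}=\emptyset$ for some finite $n$. $C(K)$ is the Banach space of real-valued continuous functions on $K$ with the supremum norm. For compact $A$ and closed $F\subseteq A$, an extension operator for $F$ in $A$ is a bounded linear map $E:C(F)\to C(A)$ with $E(f)|_F=f$ for all $f\in C(F)$. A compact space has the extension property if every nonempty closed subset admits an extension operator in it. *)

theory Defs
  imports "HOL-Analysis.Analysis"
begin

definition scattered_space :: "'a topology \<Rightarrow> bool" where
  "scattered_space X \<longleftrightarrow>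
     (\<forall>S. S \<subseteq> topspace X \<and> S \<noteq> {} \<longrightarrow> (\<exists>x\<in>S. x \<notin> X derived_set_of S))"

fun cb_deriv :: "'a topology \<Rightarrow> nat \<Rightarrow> 'a set" where
  "cb_deriv X 0 = topspace X"
| "cb_deriv X (Suc n) = cb_deriv X n \<inter> (X derived_set_of (cb_deriv X n))"

definition finite_height :: "'a topology \<Rightarrow> bool" where
  "finite_height X \<longleftrightarrow> (\<exists>n. cb_deriv X n = {})"

definition Cfun :: "'a topology \<Rightarrow> 'a set \<Rightarrow> ('a \<Rightarrow> real) set" where
  "Cfun X F = {f. continuous_map (subtopology X F) euclideanreal f}"

text \<open>Functions are compared only on
  their domains; boundedness is \<open>\<parallel>E f\<parallel>\<^sub>\<infinity> \<le> M \<parallel>f\<parallel>\<^sub>\<infinity>\<close> written pointwise.\<close>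
definition extension_operator ::
  "'a topology \<Rightarrow> 'a set \<Rightarrow> 'a set \<Rightarrow> (('a \<Rightarrow> real) \<Rightarrow> ('a \<Rightarrow> real)) \<Rightarrow> bool" where
  "extension_operator X F A E \<longleftrightarrow>
     (\<forall>f\<in>Cfun X F. E f \<in> Cfun X A) \<and>
     (\<forall>f\<in>Cfun X F. \<forall>g\<in>Cfun X F. (\<forall>y\<in>F. f y = g y) \<longrightarrow> (\<forall>x\<in>A. E f x = E g x)) \<and>
     (\<forall>f\<in>Cfun X F. \<forall>g\<in>Cfun X F. \<forall>x\<in>A. E (\<lambda>y. f y + g y) x = E f x + E g x) \<and>
     (\<forall>f\<in>Cfun X F. \<forall>c::real. \<forall>x\<in>A. E (\<lambda>y. c * f y) x = c * E f x) \<and>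
     (\<exists>M\<ge>0. \<forall>f\<in>Cfun X F. \<forall>B\<ge>0. (\<forall>y\<in>F. \<bar>f y\<bar> \<le> B) \<longrightarrow> (\<forall>x\<in>A. \<bar>E f x\<bar> \<le> M * B)) \<and>
     (\<forall>f\<in>Cfun X F. \<forall>y\<in>F. E f y = f y)"

definition admits_extension_operator :: "'a topology \<Rightarrow> 'a set \<Rightarrow> 'a set \<Rightarrow> bool" where
  "admits_extension_operator X F A \<longleftrightarrow> (\<exists>E. extension_operator X F A E)"

definition extension_property :: "'a topology \<Rightarrow> bool" where
  "extension_property X \<longleftrightarrow>
     (\<forall>F. closedin X F \<and> F \<noteq> {} \<longrightarrow> admits_extension_operator X F (topspace X))"

end

theory Submission
  imports Defs
begin

lemma Cfun_mono: "g \<in> Cfun X S \<Longrightarrow> T \<subseteq> S \<Longrightarrow> g \<in> Cfun X T"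
  unfolding Cfun_def
  by (metis continuous_map_from_subtopology mem_Collect_eq subtopology_subtopology Int_absorb1)

lemma Cfun_add: "f \<in> Cfun X S \<Longrightarrow> g \<in> Cfun X S \<Longrightarrow> (\<lambda>y. f y + g y) \<in> Cfun X S"
  unfolding Cfun_def by (simp add: continuous_map_add)

lemma Cfun_cmult: "f \<in> Cfun X S \<Longrightarrow> (\<lambda>y. c * f y) \<in> Cfun X S"
  unfolding Cfun_def by (simp add: continuous_map_real_mult_left)

lemma ext_id: "extension_operator X F F (\<lambda>f. f)"
  unfolding extension_operator_def
  by (auto intro!: exI[of _ 1])

lemma ext_comp:
  assumes E1: "extension_operator X F1 F2 E1" and E2: "extension_operator X F2 F3 E2"
    and s: "F1 \<subseteq> F2"
  shows "extension_operator X F1 F3 (\<lambda>f. E2 (E1 f))"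
proof -
  from E1 obtain M1 where M1: "M1 \<ge> 0" "\<forall>f\<in>Cfun X F1. \<forall>B\<ge>0. (\<forall>y\<in>F1. \<bar>f y\<bar> \<le> B) \<longrightarrow> (\<forall>x\<in>F2. \<bar>E1 f x\<bar> \<le> M1 * B)"
    unfolding extension_operator_def by blast
  from E2 obtain M2 where M2: "M2 \<ge> 0" "\<forall>f\<in>Cfun X F2. \<forall>B\<ge>0. (\<forall>y\<in>F2. \<bar>f y\<bar> \<le> B) \<longrightarrow> (\<forall>x\<in>F3. \<bar>E2 f x\<bar> \<le> M2 * B)"
    unfolding extension_operator_def by blast
  have c1: "\<And>f. f \<in> Cfun X F1 \<Longrightarrow> E1 f \<in> Cfun X F2" using E1 unfolding extension_operator_def by blast
  have c2: "\<And>f. f \<in> Cfun X F2 \<Longrightarrow> E2 f \<in> Cfun X F3" using E2 unfolding extension_operator_def by blast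
  have w1: "\<And>f g. f \<in> Cfun X F1 \<Longrightarrow> g \<in> Cfun X F1 \<Longrightarrow> (\<forall>y\<in>F1. f y = g y) \<Longrightarrow> (\<forall>x\<in>F2. E1 f x = E1 g x)"
    using E1 unfolding extension_operator_def by blast
  have w2: "\<And>f g. f \<in> Cfun X F2 \<Longrightarrow> g \<in> Cfun X F2 \<Longrightarrow> (\<forall>y\<in>F2. f y = g y) \<Longrightarrow> (\<forall>x\<in>F3. E2 f x = E2 g x)"
    using E2 unfolding extension_operator_def by blast
  have a1: "\<And>f g x. f \<in> Cfun X F1 \<Longrightarrow> g \<in> Cfun X F1 \<Longrightarrow> x \<in> F2 \<Longrightarrow> E1 (\<lambda>y. f y + g y) x = E1 f x + E1 g x"
    using E1 unfolding extension_operator_def by blast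
  have a2: "\<And>f g x. f \<in> Cfun X F2 \<Longrightarrow> g \<in> Cfun X F2 \<Longrightarrow> x \<in> F3 \<Longrightarrow> E2 (\<lambda>y. f y + g y) x = E2 f x + E2 g x"
    using E2 unfolding extension_operator_def by blast
  have m1: "\<And>f c x. f \<in> Cfun X F1 \<Longrightarrow> x \<in> F2 \<Longrightarrow> E1 (\<lambda>y. c * f y) x = c * E1 f x"
    using E1 unfolding extension_operator_def by blast
  have m2: "\<And>f c x. f \<in> Cfun X F2 \<Longrightarrow> x \<in> F3 \<Longrightarrow> E2 (\<lambda>y. c * f y) x = c * E2 f x"
    using E2 unfolding extension_operator_def by blast
  have r1: "\<And>f y. f \<in> Cfun X F1 \<Longrightarrow> y \<in> F1 \<Longrightarrow> E1 f y = f y"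
    using E1 unfolding extension_operator_def by blast
  have r2: "\<And>f y. f \<in> Cfun X F2 \<Longrightarrow> y \<in> F2 \<Longrightarrow> E2 f y = f y"
    using E2 unfolding extension_operator_def by blast
  show ?thesis
    unfolding extension_operator_def
  proof (intro conjI ballI allI impI)
    fix f assume "f \<in> Cfun X F1" then show "E2 (E1 f) \<in> Cfun X F3" using c1 c2 by blast
  next
    fix f g x assume f: "f \<in> Cfun X F1" and g: "g \<in> Cfun X F1" and "\<forall>y\<in>F1. f y = g y" and x: "x \<in> F3"
    then show "E2 (E1 f) x = E2 (E1 g) x" using w1 w2 c1 by blast
  next
    fix f g x assume f: "f \<in> Cfun X F1" and g: "g \<in> Cfun X F1" and x: "x \<in> F3"
    have "E2 (E1 (\<lambda>y. f y + g y)) x = E2 (\<lambda>y. E1 f y + E1 g y) x"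
      using w2[OF c1[OF Cfun_add[OF f g]] Cfun_add[OF c1[OF f] c1[OF g]]] a1[OF f g] x by blast
    also have "\<dots> = E2 (E1 f) x + E2 (E1 g) x" using a2[OF c1[OF f] c1[OF g] x] .
    finally show "E2 (E1 (\<lambda>y. f y + g y)) x = E2 (E1 f) x + E2 (E1 g) x" .
  next
    fix f c x assume f: "f \<in> Cfun X F1" and x: "x \<in> F3"
    have "E2 (E1 (\<lambda>y. c * f y)) x = E2 (\<lambda>y. c * E1 f y) x"
      using w2[OF c1[OF Cfun_cmult[OF f]] Cfun_cmult[OF c1[OF f]]] m1[OF f] x by blast
    also have "\<dots> = c * E2 (E1 f) x" using m2[OF c1[OF f] x] .
    finally show "E2 (E1 (\<lambda>y. c * f y)) x = c * E2 (E1 f) x" .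
  next
    show "\<exists>M\<ge>0. \<forall>f\<in>Cfun X F1. \<forall>B\<ge>0. (\<forall>y\<in>F1. \<bar>f y\<bar> \<le> B) \<longrightarrow> (\<forall>x\<in>F3. \<bar>E2 (E1 f) x\<bar> \<le> M * B)"
    proof (intro exI[of _ "M2 * M1"] conjI ballI allI impI)
      show "0 \<le> M2 * M1" using M1 M2 by simp
    next
      fix f B x assume f: "f \<in> Cfun X F1" and B: "0 \<le> B" and b: "\<forall>y\<in>F1. \<bar>f y\<bar> \<le> B" and x: "x \<in> F3"
      have "\<forall>y\<in>F2. \<bar>E1 f y\<bar> \<le> M1 * B" using M1 f B b by blast
      moreover have "M1 * B \<ge> 0" using M1 B by simp
      ultimately have "\<bar>E2 (E1 f) x\<bar> \<le> M2 * (M1 * B)" using M2 c1[OF f] x by blast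
      then show "\<bar>E2 (E1 f) x\<bar> \<le> M2 * M1 * B" by (simp add: mult.assoc)
    qed
  next
    fix f y assume f: "f \<in> Cfun X F1" and y: "y \<in> F1"
    then show "E2 (E1 f) y = f y" using r1 r2 c1 s by auto
  qed
qed

lemma ext_step:
  assumes cA: "closedin X A" and cB: "closedin X B" and BA: "B \<subseteq> A"
    and iso: "A \<inter> X derived_set_of A \<subseteq> B" and cF: "closedin X F"
    and E: "extension_operator X B A E"
  shows "extension_operator X (F \<union> B) (F \<union> A) (\<lambda>g x. if x \<in> F \<union> B then g x else E g x)"
proof -
  from E obtain M where M: "M \<ge> 0" "\<forall>f\<in>Cfun X B. \<forall>C\<ge>0. (\<forall>y\<in>B. \<bar>f y\<bar> \<le> C) \<longrightarrow> (\<forall>x\<in>A. \<bar>E f x\<bar> \<le> M * C)"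
    unfolding extension_operator_def by blast
  have c1: "\<And>f. f \<in> Cfun X B \<Longrightarrow> E f \<in> Cfun X A" using E unfolding extension_operator_def by blast
  have w1: "\<And>f g. f \<in> Cfun X B \<Longrightarrow> g \<in> Cfun X B \<Longrightarrow> (\<forall>y\<in>B. f y = g y) \<Longrightarrow> (\<forall>x\<in>A. E f x = E g x)"
    using E unfolding extension_operator_def by blast
  have a1: "\<And>f g x. f \<in> Cfun X B \<Longrightarrow> g \<in> Cfun X B \<Longrightarrow> x \<in> A \<Longrightarrow> E (\<lambda>y. f y + g y) x = E f x + E g x"
    using E unfolding extension_operator_def by blast
  have m1: "\<And>f c x. f \<in> Cfun X B \<Longrightarrow> x \<in> A \<Longrightarrow> E (\<lambda>y. c * f y) x = c * E f x"
    using E unfolding extension_operator_def by blast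
  have r1: "\<And>f y. f \<in> Cfun X B \<Longrightarrow> y \<in> B \<Longrightarrow> E f y = f y"
    using E unfolding extension_operator_def by blast
  have sB: "\<And>g. g \<in> Cfun X (F \<union> B) \<Longrightarrow> g \<in> Cfun X B" using Cfun_mono by blast
  let ?P = "B \<union> (A - F)"
  have cP: "closedin X ?P"
  proof -
    have "X derived_set_of (A - F) \<subseteq> A" using cA derived_set_of_mono[of "A - F" A X]
      by (auto simp: closedin_contains_derived_set)
    moreover have "X derived_set_of (A - F) \<subseteq> X derived_set_of A" by (rule derived_set_of_mono) auto
    ultimately have "X derived_set_of (A - F) \<subseteq> ?P" using iso by blast
    moreover have "X derived_set_of B \<subseteq> B" using cB by (simp add: closedin_contains_derived_set)
    moreover have "?P \<subseteq> topspace X" using cA cB by (auto dest: closedin_subset)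
    ultimately show ?thesis by (auto simp: closedin_contains_derived_set derived_set_of_Un)
  qed
  have cont: "(\<lambda>x. if x \<in> F \<union> B then g x else E g x) \<in> Cfun X (F \<union> A)" if g: "g \<in> Cfun X (F \<union> B)" for g
  proof -
    let ?h = "\<lambda>x. if x \<in> F \<union> B then g x else E g x"
    let ?T = "\<lambda>b. if b then F \<union> B else ?P"
    let ?f = "\<lambda>b. if b then g else E g"
    have gB: "g \<in> Cfun X B" using sB g .
    show ?thesis unfolding Cfun_def mem_Collect_eq
    proof (rule pasting_lemma_closed[where I="{True, False}" and T="?T" and f="?f"])
      show "finite {True, False}" by simp
    next
      fix i assume "i \<in> {True, False}"
      then show "closedin (subtopology X (F \<union> A)) (?T i)"
      proof (cases i)
        case True
        have "F \<union> B = (F \<union> A) \<inter> (F \<union> B)" using BA by blast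
        then show ?thesis using True cF cB by (auto simp: closedin_subtopology intro!: exI[of _ "F \<union> B"])
      next
        case False
        have "?P = (F \<union> A) \<inter> ?P" using BA by blast
        then show ?thesis using False cP by (auto simp: closedin_subtopology intro!: exI[of _ ?P])
      qed
    next
      fix i assume "i \<in> {True, False}"
      moreover have "continuous_map (subtopology X (F \<union> B)) euclideanreal g" using g by (simp add: Cfun_def)
      moreover have "continuous_map (subtopology X ?P) euclideanreal (E g)"
      proof -
        have "continuous_map (subtopology X A) euclideanreal (E g)" using c1[OF gB] by (simp add: Cfun_def)
        then have "continuous_map (subtopology (subtopology X A) ?P) euclideanreal (E g)"
          by (rule continuous_map_from_subtopology)
        moreover have "A \<inter> ?P = ?P" using BA by blast
        ultimately show ?thesis by (simp add: subtopology_subtopology)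
      qed
      moreover have "F \<union> A \<inter> (F \<union> B) = F \<union> B" "(F \<union> A) \<inter> (F \<union> B) = F \<union> B" "(F \<union> A) \<inter> ?P = ?P" using BA by blast+
      ultimately show "continuous_map (subtopology (subtopology X (F \<union> A)) (?T i)) euclideanreal (?f i)"
        by (auto simp: subtopology_subtopology)
    next
      fix i j x assume "i \<in> {True, False}" "j \<in> {True, False}" "x \<in> topspace (subtopology X (F \<union> A)) \<inter> ?T i \<inter> ?T j"
      then show "?f i x = ?f j x" using r1[OF gB] by auto
    next
      fix x assume "x \<in> topspace (subtopology X (F \<union> A))"
      then show "\<exists>j. j \<in> {True, False} \<and> x \<in> ?T j \<and> ?h x = ?f j x"
        by (cases "x \<in> F \<union> B") auto
    qed
  qed
  show ?thesis
    unfolding extension_operator_def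
  proof (intro conjI ballI allI impI)
    fix f assume "f \<in> Cfun X (F \<union> B)" then show "(\<lambda>x. if x \<in> F \<union> B then f x else E f x) \<in> Cfun X (F \<union> A)"
      by (rule cont)
  next
    fix f g x assume f: "f \<in> Cfun X (F \<union> B)" and g: "g \<in> Cfun X (F \<union> B)" and e: "\<forall>y\<in>F \<union> B. f y = g y" and x: "x \<in> F \<union> A"
    show "(if x \<in> F \<union> B then f x else E f x) = (if x \<in> F \<union> B then g x else E g x)"
      using w1[OF sB[OF f] sB[OF g]] e x by auto
  next
    fix f g x assume f: "f \<in> Cfun X (F \<union> B)" and g: "g \<in> Cfun X (F \<union> B)" and x: "x \<in> F \<union> A"
    show "(if x \<in> F \<union> B then f x + g x else E (\<lambda>y. f y + g y) x) =
       (if x \<in> F \<union> B then f x else E f x) + (if x \<in> F \<union> B then g x else E g x)"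
      using a1[OF sB[OF f] sB[OF g]] x by auto
  next
    fix f c x assume f: "f \<in> Cfun X (F \<union> B)" and x: "x \<in> F \<union> A"
    show "(if x \<in> F \<union> B then c * f x else E (\<lambda>y. c * f y) x) = c * (if x \<in> F \<union> B then f x else E f x)"
      using m1[OF sB[OF f]] x by auto
  next
    show "\<exists>N\<ge>0. \<forall>f\<in>Cfun X (F \<union> B). \<forall>C\<ge>0. (\<forall>y\<in>F \<union> B. \<bar>f y\<bar> \<le> C) \<longrightarrow>
        (\<forall>x\<in>F \<union> A. \<bar>if x \<in> F \<union> B then f x else E f x\<bar> \<le> N * C)"
    proof (intro exI[of _ "max 1 M"] conjI ballI allI impI)
      show "0 \<le> max 1 M" by simp
    next
      fix f C x assume f: "f \<in> Cfun X (F \<union> B)" and C: "0 \<le> C" and b: "\<forall>y\<in>F \<union> B. \<bar>f y\<bar> \<le> C" and x: "x \<in> F \<union> A"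
      have "1 * C \<le> max 1 M * C" using C by (intro mult_right_mono) auto
      moreover have "M * C \<le> max 1 M * C" using C by (intro mult_right_mono) auto
      moreover have "x \<in> A \<Longrightarrow> \<bar>E f x\<bar> \<le> M * C" using M sB[OF f] C b by blast
      ultimately show "\<bar>if x \<in> F \<union> B then f x else E f x\<bar> \<le> max 1 M * C"
        using b x by (auto intro: order_trans)
    qed
  next
    fix f y assume "y \<in> F \<union> B" then show "(if y \<in> F \<union> B then f y else E f y) = f y" by simp
  qed
qed

lemma cb_closed: "Hausdorff_space X \<Longrightarrow> closedin X (cb_deriv X n)"
  by (induction n) (auto intro: closedin_Int closedin_derived_set_of)

lemma cb_anti: "n \<le> m \<Longrightarrow> cb_deriv X m \<subseteq> cb_deriv X n"
  by (rule lift_Suc_antimono_le[of "cb_deriv X"]) auto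

theorem corollary3p11:
  fixes X :: "'a topology"
  assumes "compact_space X" and "Hausdorff_space X" and "scattered_space X"
    and "finite_height X"
    and "\<forall>n. admits_extension_operator X (cb_deriv X (Suc n)) (cb_deriv X n)"
  shows "extension_property X"
  unfolding extension_property_def
proof (intro allI impI)
  fix F assume F: "closedin X F \<and> F \<noteq> {}"
  from assms(4) obtain N where N: "cb_deriv X N = {}" unfolding finite_height_def by blast
  have main: "\<forall>n. N \<le> n + k \<longrightarrow> admits_extension_operator X F (F \<union> cb_deriv X n)" for k
  proof (induction k)
    case 0
    show ?case
    proof (intro allI impI)
      fix n assume "N \<le> n + 0"
      then have "cb_deriv X n = {}" using cb_anti[of N n X] N by auto
      then show "admits_extension_operator X F (F \<union> cb_deriv X n)"
        using ext_id unfolding admits_extension_operator_def by auto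
    qed
  next
    case (Suc k)
    show ?case
    proof (intro allI impI)
      fix n assume "N \<le> n + Suc k"
      then have "admits_extension_operator X F (F \<union> cb_deriv X (Suc n))" using Suc.IH[rule_format, of "Suc n"] by simp
      then obtain E1 where E1: "extension_operator X F (F \<union> cb_deriv X (Suc n)) E1"
        unfolding admits_extension_operator_def by blast
      obtain E where E: "extension_operator X (cb_deriv X (Suc n)) (cb_deriv X n) E"
        using assms(5) unfolding admits_extension_operator_def by blast
      have E2: "extension_operator X (F \<union> cb_deriv X (Suc n)) (F \<union> cb_deriv X n)
          (\<lambda>g x. if x \<in> F \<union> cb_deriv X (Suc n) then g x else E g x)"
        by (rule ext_step[OF cb_closed[OF assms(2)] cb_closed[OF assms(2)] _ _ _ E])
           (use F in auto)
      show "admits_extension_operator X F (F \<union> cb_deriv X n)"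
        unfolding admits_extension_operator_def using ext_comp[OF E1 E2] by blast
    qed
  qed
  have "admits_extension_operator X F (F \<union> cb_deriv X 0)" using main[of N] by (metis le_add2)
  moreover have "F \<union> cb_deriv X 0 = topspace X" using F closedin_subset by auto
  ultimately show "admits_extension_operator X F (topspace X)" by simp
qed

end
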